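(* Let $B$ be a blueprint and let $I\subseteq B$ be an ideal of $B$ that contains all absorbing elements of $B$. Then $\sim_I$ is a congruence on $B$, its absorbing ideal $I_{\sim_I}$ equals $I$, and $\sim_I$ is the smallest congruence on $B$ whose absorbing ideal is $I$.
   Context: A monoid is a commutative semigroup $A$, written multiplicatively, with neutral element $1$. For a monoid $A$, $\mathbb N[A]$ denotes the semiring of finite formal sums $\sum a_i$ of elements $a_i\in A$ (repetitions allowed), with empty sum $\underline0$ and multiplication extended bilinearly from $A$. A pre-addition on $A$ is a relation $\mathcal R\subseteq\mathbb N[A]\times\mathbb N[A]$, written $\sum a_i\equiv\sum b_j$, which is an equivalence relation and satisfies: if $\sum a_i\equiv\sum b_j$ and $\sum c_k\equiv\sum d_l$, then $\sum a_i+\sum c_k\equiv\sum b_j+\sum d_l$ and $\sum_{i,k}a_ic_k\equiv\sum_{j,l}b_jd_l$. A blueprint $B=(A,\mathcal R)$ is a monoid $A$ with a pre-addition $\mathcal R$; we write $a\in B$ for $a\in A$. An element $e$ with $e\equiv\underline0$ is a zero of $B$; an element $e$ with $eb\equiv e$ for all $b\in B$ is an absorbing element. For an equivalence relation $\sim$ on $A$, its linear extension $\sim_{\mathbb N}$ is the equivalence relation on $\mathbb N[A]$ generated by $\sum_{i=1}^n a_i\sim_{\mathbb N}\sum_{i=1}^n b_i$ whenever $a_i\sim b_i$ for all $i$; and $\sim_{\mathcal R}$ is the smallest equivalence relation on $\mathbb N[A]$ containing both $\mathcal R$ and $\sim_{\mathbb N}$. A congruence on $B$ is an equivalence relation $\sim$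 on $A$ such that (C1) $\sim_{\mathbb N}$ is a pre-addition on $A$, and (C2) the restriction of $\sim_{\mathcal R}$ to $A$ equals $\sim$. The absorbing ideal of a congruence $\sim$ is $I_\sim=\{e\in B: eb\sim e\text{ for all }b\in B\}$. For a subset $I\subseteq B$, let $\sim^I$ be the equivalence relation on $A$ with $a\sim^I b$ iff $a=b$ or $a,b\in I$, and let $\sim_I$ be the relation on $A$ with $a\sim_I b$ iff there is a finite sequence $a\equiv\sum_k c_{1,k}\sim^I_{\mathbb N}\sum_k d_{1,k}\equiv\sum_k c_{2,k}\sim^I_{\mathbb N}\cdots\sim^I_{\mathbb N}\sum_k d_{n,k}\equiv b$ with $c_{i,k},d_{i,k}\in A$ (equivalently, $\sim_I$ is the restriction of $(\sim^I)_{\mathcal R}$ to $A$). An ideal of $B$ is a subset $I\subseteq B$ such that (I1) $ab\in I$ for all $a\in I$, $b\in B$; (I2) every zero of $B$ lies in $I$; (I3) if $a\sim_I b$ and $b\in I$, then $a\in I$. *)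

theory Defs
  imports "HOL-Library.Multiset"
begin

text \<open>The monoid A is the carrier type 'a (class comm_monoid_mult).
  N[A] is modelled by 'a multiset (finite formal sums, repetitions allowed),
  with empty sum {#} and sum (+).\<close>

definition msum_mult :: "'a::comm_monoid_mult multiset \<Rightarrow> 'a multiset \<Rightarrow> 'a multiset" where
  "msum_mult M N = (\<Sum>a\<in>#M. image_mset (\<lambda>c. a * c) N)"

definition pre_addition :: "('a::comm_monoid_mult multiset \<times> 'a multiset) set \<Rightarrow> bool" where
  "pre_addition R \<longleftrightarrow> equiv UNIV R \<and>
     (\<forall>M1 N1 M2 N2. (M1, N1) \<in> R \<longrightarrow> (M2, N2) \<in> R \<longrightarrow>
        (M1 + M2, N1 + N2) \<in> R \<and> (msum_mult M1 M2, msum_mult N1 N2) \<in> R)"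

definition is_zero :: "('a::comm_monoid_mult multiset \<times> 'a multiset) set \<Rightarrow> 'a \<Rightarrow> bool" where
  "is_zero R e \<longleftrightarrow> ({#e#}, {#}) \<in> R"

definition is_absorbing :: "('a::comm_monoid_mult multiset \<times> 'a multiset) set \<Rightarrow> 'a \<Rightarrow> bool" where
  "is_absorbing R e \<longleftrightarrow> (\<forall>b. ({#e * b#}, {#e#}) \<in> R)"

definition lin_ext :: "('a \<times> 'a) set \<Rightarrow> ('a multiset \<times> 'a multiset) set" where
  "lin_ext S = (let G = {(M, N). rel_mset (\<lambda>a b. (a, b) \<in> S) M N} in (G \<union> G\<inverse>)\<^sup>*)"

definition sim_R :: "('a multiset \<times> 'a multiset) set \<Rightarrow> ('a \<times> 'a) set \<Rightarrow> ('a multiset \<times> 'a multiset) set" where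
  "sim_R R S = (let G = R \<union> lin_ext S in (G \<union> G\<inverse>)\<^sup>*)"

definition congruence_bp :: "('a::comm_monoid_mult multiset \<times> 'a multiset) set \<Rightarrow> ('a \<times> 'a) set \<Rightarrow> bool" where
  "congruence_bp R S \<longleftrightarrow> equiv UNIV S \<and> pre_addition (lin_ext S) \<and>
     {(a, b). ({#a#}, {#b#}) \<in> sim_R R S} = S"

definition absorbing_ideal :: "('a::comm_monoid_mult \<times> 'a) set \<Rightarrow> 'a set" where
  "absorbing_ideal S = {e. \<forall>b. (e * b, e) \<in> S}"

definition sim_sup :: "'a set \<Rightarrow> ('a \<times> 'a) set" where
  "sim_sup I = {(a, b). a = b \<or> (a \<in> I \<and> b \<in> I)}"

text \<open>sim_I: restriction of (sim^I)_R to A.\<close>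
definition sim_sub :: "('a multiset \<times> 'a multiset) set \<Rightarrow> 'a set \<Rightarrow> ('a \<times> 'a) set" where
  "sim_sub R I = {(a, b). ({#a#}, {#b#}) \<in> sim_R R (sim_sup I)}"

definition bp_ideal :: "('a::comm_monoid_mult multiset \<times> 'a multiset) set \<Rightarrow> 'a set \<Rightarrow> bool" where
  "bp_ideal R I \<longleftrightarrow>
     (\<forall>a b. a \<in> I \<longrightarrow> a * b \<in> I) \<and>
     (\<forall>e. is_zero R e \<longrightarrow> e \<in> I) \<and>
     (\<forall>a b. (a, b) \<in> sim_sub R I \<longrightarrow> b \<in> I \<longrightarrow> a \<in> I)"

end

theory Submission
  imports Defs
begin

lemma rel_mset_induct_fixed[consumes 1, case_names empty add]:
  assumes "rel_mset P M N" "Q {#} {#}"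
    "\<And>a b M N. P a b \<Longrightarrow> rel_mset P M N \<Longrightarrow> Q M N \<Longrightarrow> Q (add_mset a M) (add_mset b N)"
  shows "Q M N"
  using assms(1)
proof (induct M arbitrary: N)
  case empty then show ?case using assms(2) by simp
next
  case (add a M)
  obtain N1 b where N: "N = add_mset b N1" and ab: "P a b" and r: "rel_mset P M N1"
    using msed_rel_invL[OF add.prems] by blast
  have "Q M N1" using add.hyps r .
  then show ?case unfolding N by (rule assms(3)[OF ab r])
qed

lemma rel_mset_add:
  "rel_mset P M N \<Longrightarrow> rel_mset P K L \<Longrightarrow> rel_mset P (M + K) (N + L)"
  by (induct rule: rel_mset_induct_fixed) (auto simp: rel_mset_Plus)

lemma rel_mset_refl_gen: "(\<And>a. P a a) \<Longrightarrow> rel_mset P K K"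
  by (induct K) (auto simp: rel_mset_Zero rel_mset_Plus)

lemma rel_mset_img:
  "rel_mset P M N \<Longrightarrow> (\<And>a b. P a b \<Longrightarrow> Q (f a) (f b)) \<Longrightarrow> rel_mset Q (image_mset f M) (image_mset f N)"
  by (induct rule: rel_mset_induct_fixed) (auto simp: rel_mset_Zero rel_mset_Plus)

lemma sym_equiv: "equiv UNIV ((G \<union> G\<inverse>)\<^sup>*)"
  unfolding equiv_def
  by (auto simp: refl_rtrancl sym_Un_converse intro: sym_rtrancl trans_rtrancl)

lemma rtrancl_sym_map:
  assumes "(M, N) \<in> (G \<union> G\<inverse>)\<^sup>*"
    and "\<And>x y. (x, y) \<in> G \<Longrightarrow> (f x, f y) \<in> (H \<union> H\<inverse>)\<^sup>*"
  shows "(f M, f N) \<in> (H \<union> H\<inverse>)\<^sup>*"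
  using assms(1)
proof (induct rule: rtrancl_induct)
  case base then show ?case by simp
next
  case (step y z)
  have e: "equiv UNIV ((H \<union> H\<inverse>)\<^sup>*)" by (rule sym_equiv)
  from step(2) have "(f y, f z) \<in> (H \<union> H\<inverse>)\<^sup>*"
  proof
    assume "(y, z) \<in> G" then show ?thesis by (rule assms(2))
  next
    assume "(y, z) \<in> G\<inverse>"
    then have "(f z, f y) \<in> (H \<union> H\<inverse>)\<^sup>*" using assms(2) by auto
    then show ?thesis using e unfolding equiv_def sym_def by blast
  qed
  with step(3) show ?case by (rule rtrancl_trans)
qed

lemma lin_ext_equiv: "equiv UNIV (lin_ext S)"
  unfolding lin_ext_def Let_def by (rule sym_equiv)

lemma sim_R_equiv: "equiv UNIV (sim_R R S)"
  unfolding sim_R_def Let_def by (rule sym_equiv)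

lemma lin_ext_base: "rel_mset (\<lambda>a b. (a, b) \<in> S) M N \<Longrightarrow> (M, N) \<in> lin_ext S"
  unfolding lin_ext_def Let_def by auto

lemma lin_ext_map:
  assumes "(M, N) \<in> lin_ext S"
    and "\<And>x y. rel_mset (\<lambda>a b. (a, b) \<in> S) x y \<Longrightarrow> rel_mset (\<lambda>a b. (a, b) \<in> S') (f x) (f y)"
  shows "(f M, f N) \<in> lin_ext S'"
  using assms(1) unfolding lin_ext_def Let_def
  by (rule rtrancl_sym_map) (use assms(2) in auto)

lemma sim_R_R: "R \<subseteq> sim_R R T" and sim_R_lin: "lin_ext T \<subseteq> sim_R R T"
  unfolding sim_R_def Let_def by auto

lemma sim_R_map:
  assumes "(M, N) \<in> sim_R R T"
    and "\<And>x y. (x, y) \<in> R \<Longrightarrow> (f x, f y) \<in> sim_R R' T'"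
    and "\<And>x y. (x, y) \<in> lin_ext T \<Longrightarrow> (f x, f y) \<in> sim_R R' T'"
  shows "(f M, f N) \<in> sim_R R' T'"
  using assms(1) unfolding sim_R_def Let_def
  by (rule rtrancl_sym_map) (use assms(2,3) in \<open>auto simp: sim_R_def Let_def\<close>)

lemma equiv_trans': "equiv UNIV E \<Longrightarrow> (a, b) \<in> E \<Longrightarrow> (b, c) \<in> E \<Longrightarrow> (a, c) \<in> E"
  unfolding equiv_def trans_def by blast

lemma equiv_sym': "equiv UNIV E \<Longrightarrow> (a, b) \<in> E \<Longrightarrow> (b, a) \<in> E"
  unfolding equiv_def sym_def by blast

lemma equiv_refl': "equiv UNIV E \<Longrightarrow> (a, a) \<in> E"
  unfolding equiv_def refl_on_def by blast

lemma lin_ext_add: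
  assumes r: "\<And>a. (a, a) \<in> S" and "(M1, N1) \<in> lin_ext S" "(M2, N2) \<in> lin_ext S"
  shows "(M1 + M2, N1 + N2) \<in> lin_ext S"
proof -
  have rr: "rel_mset (\<lambda>a b. (a, b) \<in> S) K K" for K by (rule rel_mset_refl_gen) (rule r)
  have "((\<lambda>X. X + M2) M1, (\<lambda>X. X + M2) N1) \<in> lin_ext S"
    by (rule lin_ext_map[OF assms(2)]) (auto intro: rel_mset_add rr)
  moreover have "((\<lambda>X. N1 + X) M2, (\<lambda>X. N1 + X) N2) \<in> lin_ext S"
    by (rule lin_ext_map[OF assms(3)]) (auto intro: rel_mset_add rr)
  ultimately show ?thesis using equiv_trans'[OF lin_ext_equiv] by blast
qed

lemma sim_R_add1:
  assumes pa: "pre_addition R" and r: "\<And>a. (a, a) \<in> T" and "(M, N) \<in> sim_R R T"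
  shows "(M + K, N + K) \<in> sim_R R T"
proof -
  have eR: "equiv UNIV R" using pa unfolding pre_addition_def by simp
  show ?thesis
  proof (rule sim_R_map[OF assms(3), where f = "\<lambda>X. X + K"])
    fix x y assume "(x, y) \<in> R"
    then have "(x + K, y + K) \<in> R" using pa equiv_refl'[OF eR] unfolding pre_addition_def by blast
    then show "(x + K, y + K) \<in> sim_R R T" using sim_R_R by blast
  next
    fix x y assume "(x, y) \<in> lin_ext T"
    then have "(x + K, y + K) \<in> lin_ext T"
      using lin_ext_add[OF r] equiv_refl'[OF lin_ext_equiv] by blast
    then show "(x + K, y + K) \<in> sim_R R T" using sim_R_lin by blast
  qed
qed

lemma sim_R_add:
  assumes pa: "pre_addition R" and r: "\<And>a. (a, a) \<in> T"
    and "(M1, N1) \<in> sim_R R T" "(M2, N2) \<in> sim_R R T"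
  shows "(M1 + M2, N1 + N2) \<in> sim_R R T"
proof -
  have "(M1 + M2, N1 + M2) \<in> sim_R R T" by (rule sim_R_add1[OF pa r assms(3)])
  moreover have "(M2 + N1, N2 + N1) \<in> sim_R R T" by (rule sim_R_add1[OF pa r assms(4)])
  ultimately show ?thesis using equiv_trans'[OF sim_R_equiv] by (simp add: add.commute)
qed

lemma msum_mult_single: "msum_mult {#c#} M = image_mset (\<lambda>x. c * x) M"
  by (simp add: msum_mult_def)

lemma sim_R_mult:
  assumes pa: "pre_addition R" and cl: "\<And>a b. (a, b) \<in> T \<Longrightarrow> (c * a, c * b) \<in> T"
    and "(M, N) \<in> sim_R R T"
  shows "(image_mset (\<lambda>x. c * x) M, image_mset (\<lambda>x. c * x) N) \<in> sim_R R T"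
proof -
  have eR: "equiv UNIV R" using pa unfolding pre_addition_def by simp
  show ?thesis
  proof (rule sim_R_map[OF assms(3)])
    fix x y assume "(x, y) \<in> R"
    then have "(msum_mult {#c#} x, msum_mult {#c#} y) \<in> R"
      using pa equiv_refl'[OF eR] unfolding pre_addition_def by blast
    then show "(image_mset (\<lambda>x. c * x) x, image_mset (\<lambda>x. c * x) y) \<in> sim_R R T"
      using sim_R_R by (auto simp: msum_mult_single)
  next
    fix x y assume "(x, y) \<in> lin_ext T"
    then have "(image_mset (\<lambda>x. c * x) x, image_mset (\<lambda>x. c * x) y) \<in> lin_ext T"
      by (rule lin_ext_map) (auto intro: rel_mset_img cl)
    then show "(image_mset (\<lambda>x. c * x) x, image_mset (\<lambda>x. c * x) y) \<in> sim_R R T"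
      using sim_R_lin by blast
  qed
qed


lemma rel_mset_img2: "(\<And>x. P (f x) (g x)) \<Longrightarrow> rel_mset P (image_mset f K) (image_mset g K)"
  by (induct K) (auto simp: rel_mset_Zero rel_mset_Plus)

lemma rel_mset_msum_left:
  assumes "rel_mset P M N" and "\<And>a b c. P a b \<Longrightarrow> P (a * c) (b * c)"
  shows "rel_mset P (msum_mult M K) (msum_mult N K)"
  using assms(1)
proof (induct rule: rel_mset_induct_fixed)
  case empty then show ?case by (simp add: msum_mult_def rel_mset_Zero)
next
  case (add a b M N)
  have "rel_mset P (image_mset (\<lambda>c. a * c) K) (image_mset (\<lambda>c. b * c) K)"
    by (rule rel_mset_img2) (rule assms(2)[OF add(1)])
  with add(3) show ?case by (simp add: msum_mult_def rel_mset_add)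
qed

lemma rel_mset_msum_right:
  assumes "rel_mset P M N" and "\<And>a b c. P a b \<Longrightarrow> P (c * a) (c * b)"
  shows "rel_mset P (msum_mult K M) (msum_mult K N)"
proof (induct K)
  case empty then show ?case by (simp add: msum_mult_def rel_mset_Zero)
next
  case (add a K)
  have "rel_mset P (image_mset (\<lambda>c. a * c) M) (image_mset (\<lambda>c. a * c) N)"
    by (rule rel_mset_img[OF assms(1)]) (rule assms(2))
  with add show ?case by (simp add: msum_mult_def rel_mset_add)
qed

lemma lin_ext_mult:
  fixes S :: "('a::comm_monoid_mult \<times> 'a) set"
  assumes cl: "\<And>a b c. (a, b) \<in> S \<Longrightarrow> (c * a, c * b) \<in> S"
    and "(M1, N1) \<in> lin_ext S" "(M2, N2) \<in> lin_ext S"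
  shows "(msum_mult M1 M2, msum_mult N1 N2) \<in> lin_ext S"
proof -
  have cl': "(a * c, b * c) \<in> S" if "(a, b) \<in> S" for a b c
    using cl[OF that, of c] by (simp add: mult.commute)
  have "((\<lambda>X. msum_mult X M2) M1, (\<lambda>X. msum_mult X M2) N1) \<in> lin_ext S"
    by (rule lin_ext_map[OF assms(2)]) (auto intro: rel_mset_msum_left cl')
  moreover have "((\<lambda>X. msum_mult N1 X) M2, (\<lambda>X. msum_mult N1 X) N2) \<in> lin_ext S"
    by (rule lin_ext_map[OF assms(3)]) (auto intro: rel_mset_msum_right cl)
  ultimately show ?thesis using equiv_trans'[OF lin_ext_equiv] by blast
qed

lemma lin_ext_Id: "lin_ext Id = Id"
proof -
  have e: "{(M, N). rel_mset (=) M N} = Id"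
    by (auto simp: multiset.rel_eq)
  show ?thesis unfolding lin_ext_def Let_def by (simp add: e)
qed

lemma sim_R_Id: assumes "equiv UNIV R" shows "sim_R R Id \<subseteq> R"
proof -
  have RI: "R \<union> Id = R" using equiv_refl'[OF assms] by auto
  have eq: "sim_R R Id = (R \<union> R\<inverse>)\<^sup>*" unfolding sim_R_def Let_def lin_ext_Id RI ..
  show ?thesis unfolding eq
  proof
    fix p assume "p \<in> (R \<union> R\<inverse>)\<^sup>*"
    then obtain M N where p: "p = (M, N)" and mn: "(M, N) \<in> (R \<union> R\<inverse>)\<^sup>*" by (cases p) auto
    from mn have "(M, N) \<in> R"
    proof (induct rule: rtrancl_induct)
      case base show ?case by (rule equiv_refl'[OF assms])
    next
      case (step y z)
      then have "(y, z) \<in> R" using equiv_sym'[OF assms] by blast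
      with step(3) show ?case by (rule equiv_trans'[OF assms])
    qed
    then show "p \<in> R" using p by simp
  qed
qed

theorem mainTheorem9:
  fixes R :: "('a::comm_monoid_mult multiset \<times> 'a multiset) set"
    and I :: "'a set"
  assumes "pre_addition R"
    and "bp_ideal R I"
    and "{e. is_absorbing R e} \<subseteq> I"
  shows "congruence_bp R (sim_sub R I)
    \<and> absorbing_ideal (sim_sub R I) = I
    \<and> (\<forall>S. congruence_bp R S \<and> absorbing_ideal S = I \<longrightarrow> sim_sub R I \<subseteq> S)"
proof -
  note pa = assms(1)
  have eR: "equiv UNIV R" using pa unfolding pre_addition_def by simp
  have I1: "\<And>a b. a \<in> I \<Longrightarrow> a * b \<in> I" and I3: "\<And>a b. (a, b) \<in> sim_sub R I \<Longrightarrow> b \<in> I \<Longrightarrow> a \<in> I"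
    using assms(2) unfolding bp_ideal_def by blast+
  define T where "T = sim_sup I"
  define S where "S = sim_sub R I"
  have Sdef: "(a, b) \<in> S \<longleftrightarrow> ({#a#}, {#b#}) \<in> sim_R R T" for a b
    by (simp add: S_def T_def sim_sub_def)
  have rT: "(a, a) \<in> T" for a by (simp add: T_def sim_sup_def)
  have clT: "(c * a, c * b) \<in> T" if "(a, b) \<in> T" for a b c
    using that I1 by (auto simp: T_def sim_sup_def mult.commute)
  have eS: "equiv UNIV S"
    using equiv_refl'[OF sim_R_equiv] equiv_sym'[OF sim_R_equiv] equiv_trans'[OF sim_R_equiv]
    unfolding equiv_def refl_on_def sym_def trans_def Sdef by auto
  have clS: "(c * a, c * b) \<in> S" if "(a, b) \<in> S" for a b c
    using sim_R_mult[OF pa clT, of "{#a#}" "{#b#}"] that by (simp add: Sdef)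
  have linE: "lin_ext S \<subseteq> sim_R R T"
  proof
    fix p assume "p \<in> lin_ext S"
    then obtain M N where p: "p = (M, N)" and "(M, N) \<in> lin_ext S" by (cases p) auto
    then have "(id M, id N) \<in> lin_ext S" by simp
    have "(M, N) \<in> (({(M, N). rel_mset (\<lambda>a b. (a, b) \<in> S) M N}) \<union> ({(M, N). rel_mset (\<lambda>a b. (a, b) \<in> S) M N})\<inverse>)\<^sup>*"
      using \<open>(M, N) \<in> lin_ext S\<close> unfolding lin_ext_def Let_def .
    then have "(M, N) \<in> sim_R R T"
    proof (induct rule: rtrancl_induct)
      case base then show ?case by (rule equiv_refl'[OF sim_R_equiv])
    next
      case (step y z)
      have g: "(x, w) \<in> sim_R R T" if "rel_mset (\<lambda>a b. (a, b) \<in> S) x w" for x w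
        using that
      proof (induct rule: rel_mset_induct_fixed)
        case empty then show ?case by (rule equiv_refl'[OF sim_R_equiv])
      next
        case (add a b M N)
        have "({#a#} + M, {#b#} + N) \<in> sim_R R T"
          by (rule sim_R_add[OF pa rT]) (use add Sdef in auto)
        then show ?case by simp
      qed
      from step(2) have "(y, z) \<in> sim_R R T"
        using g equiv_sym'[OF sim_R_equiv] by blast
      with step(3) show ?case using equiv_trans'[OF sim_R_equiv] by blast
    qed
    then show "p \<in> sim_R R T" using p by simp
  qed
  have simRS: "sim_R R S \<subseteq> sim_R R T"
  proof
    fix p assume "p \<in> sim_R R S"
    then obtain M N where p: "p = (M, N)" and "(M, N) \<in> sim_R R S" by (cases p) auto
    have "(id M, id N) \<in> sim_R R T"
      by (rule sim_R_map[OF \<open>(M, N) \<in> sim_R R S\<close>]) (use sim_R_R linE in auto)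
    then show "p \<in> sim_R R T" using p by simp
  qed
  have c1: "congruence_bp R S"
    unfolding congruence_bp_def pre_addition_def
  proof (intro conjI allI impI eS lin_ext_equiv)
    fix M1 N1 M2 N2 assume "(M1, N1) \<in> lin_ext S" "(M2, N2) \<in> lin_ext S"
    then show "(M1 + M2, N1 + N2) \<in> lin_ext S" "(msum_mult M1 M2, msum_mult N1 N2) \<in> lin_ext S"
      using lin_ext_add[OF equiv_refl'[OF eS]] lin_ext_mult[OF clS] by blast+
  next
    show "{(a, b). ({#a#}, {#b#}) \<in> sim_R R S} = S"
    proof (intro equalityI subsetI)
      fix p assume "p \<in> {(a, b). ({#a#}, {#b#}) \<in> sim_R R S}"
      then show "p \<in> S" using simRS Sdef by auto
    next
      fix p assume "p \<in> S"
      then obtain a b where p: "p = (a, b)" "(a, b) \<in> S" by (cases p) auto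
      then have "({#a#}, {#b#}) \<in> lin_ext S"
        by (intro lin_ext_base rel_mset_Plus) (auto simp: rel_mset_Zero)
      then show "p \<in> {(a, b). ({#a#}, {#b#}) \<in> sim_R R S}" using p sim_R_lin by blast
    qed
  qed
  have c2: "absorbing_ideal S = I"
  proof (intro equalityI subsetI)
    fix e assume "e \<in> I"
    have "(e * b, e) \<in> S" for b
    proof -
      have "(e * b, e) \<in> T" using I1[OF \<open>e \<in> I\<close>] \<open>e \<in> I\<close> by (simp add: T_def sim_sup_def)
      then have "({#e * b#}, {#e#}) \<in> lin_ext T"
        by (intro lin_ext_base rel_mset_Plus) (auto simp: rel_mset_Zero)
      then show ?thesis using sim_R_lin Sdef by blast
    qed
    then show "e \<in> absorbing_ideal S" by (simp add: absorbing_ideal_def)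
  next
    fix e assume "e \<in> absorbing_ideal S"
    then have ab: "(e * b, e) \<in> S" for b by (simp add: absorbing_ideal_def)
    show "e \<in> I"
    proof (cases "I = {}")
      case False
      then obtain i where "i \<in> I" by blast
      then have "e * i \<in> I" using I1[of i e] by (simp add: mult.commute)
      moreover have "(e, e * i) \<in> sim_sub R I" using equiv_sym'[OF eS ab] S_def by simp
      ultimately show ?thesis using I3 by blast
    next
      case True
      then have "T = Id" by (auto simp: T_def sim_sup_def)
      then have "({#e * b#}, {#e#}) \<in> R" for b using ab[of b] Sdef sim_R_Id[OF eR] by auto
      then have "is_absorbing R e" by (simp add: is_absorbing_def)
      then show ?thesis using assms(3) by blast
    qed
  qed
  have c3: "sim_sub R I \<subseteq> S'" if "congruence_bp R S'" "absorbing_ideal S' = I" for S'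
  proof
    have eS': "equiv UNIV S'" and bk: "{(a, b). ({#a#}, {#b#}) \<in> sim_R R S'} = S'"
      using that(1) unfolding congruence_bp_def by auto
    have TS': "(a, b) \<in> S'" if "(a, b) \<in> T" for a b
    proof (cases "a = b")
      case True then show ?thesis using equiv_refl'[OF eS'] by simp
    next
      case False
      with that have ab: "a \<in> I" "b \<in> I" by (auto simp: T_def sim_sup_def)
      have "(a * b, a) \<in> S'" "(b * a, b) \<in> S'"
        using ab \<open>absorbing_ideal S' = I\<close> unfolding absorbing_ideal_def by blast+
      then show ?thesis using equiv_sym'[OF eS'] equiv_trans'[OF eS'] by (metis mult.commute)
    qed
    have linT: "lin_ext T \<subseteq> lin_ext S'"
    proof
      fix p assume "p \<in> lin_ext T"
      then obtain M N where p: "p = (M, N)" and mn: "(M, N) \<in> lin_ext T" by (cases p) auto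
      have "(id M, id N) \<in> lin_ext S'"
        by (rule lin_ext_map[OF mn]) (auto elim: multiset.rel_mono_strong intro: TS')
      then show "p \<in> lin_ext S'" using p by simp
    qed
    fix p assume "p \<in> sim_sub R I"
    then obtain a b where p: "p = (a, b)" and "({#a#}, {#b#}) \<in> sim_R R T"
      by (cases p) (auto simp: sim_sub_def T_def)
    have "(id {#a#}, id {#b#}) \<in> sim_R R S'"
      by (rule sim_R_map[OF \<open>({#a#}, {#b#}) \<in> sim_R R T\<close>]) (use sim_R_R[of R S'] in auto, use linT sim_R_lin[of S' R] in auto)
    then show "p \<in> S'" using p bk by auto
  qed
  show ?thesis using c1 c2 c3 unfolding S_def by blast
qed

end
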